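(* A sticky tree is determined by its underlying plane tree together with its certificate-counting function: if $(T,\ell)$ and $(T,\ell')$ are sticky trees with the same underlying plane tree $T$ and the same certificate-counting function, then $\ell=\ell'$.
   Context: Sticky trees: a plane tree is a rooted tree in which the children of every node are linearly ordered (left to right). The root has depth $0$, a child of a node of depth $d$ has depth $d+1$. The prefix order is: the root, followed by the prefix order of the subtree of its leftmost child, then of its second child, and so on. $S_u$ denotes the subtree rooted at $u$. A sticky tree is a plane tree $S$ with node set $V$ and a labeling $\ell:V\to\mathbb{N}$ such that: (1) every node $u$ of depth $d$ has $0\le\ell(u)\le d$; (2) every node $u$ of depth $d>0$ has some $v\in S_u$ (possibly $v=u$) with $\ell(v)<d$; (3) for every node $u$ of depth $d$, if some $v\in S_u$ has $\ell(v)=d$, then every node of $S_u$ (including $u$) preceding $v$ in prefix order has label at least $d$. The certificate of a non-root node $u$ of depth $d$ is the first node, in prefix order, of $S_u$ whose label is $<d$. The certificate-counting function $c:V\to\mathbb{N}$ assigns to each node $w$ the number of non-root nodes whose certificate is $w$. *)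

theory Defs
  imports Main
begin

text \<open>Nodes of a tree are identified by their addresses: the list of child indices
  on the path from the root (root = []).  The depth of a node u is length u.\<close>

datatype ptree = Node "ptree list"

function preorder :: "ptree \<Rightarrow> nat list list" where
  "preorder (Node ts) =
     [] # concat (map (\<lambda>i. map (Cons i) (preorder (ts ! i))) [0..<length ts])"
  by pat_completeness auto
termination
proof (relation "measure size")
  fix ts :: "ptree list" and i :: nat
  assume "i \<in> set [0..<length ts]"
  then have "ts ! i \<in> set ts" by simp
  then have "size (ts ! i) \<le> size_list size ts" by (rule size_list_estimation') simp
  then show "(ts ! i, Node ts) \<in> measure size" by simp
qed simp

definition nodes :: "ptree \<Rightarrow> nat list set" where
  "nodes T = set (preorder T)"

definition subtree :: "ptree \<Rightarrow> nat list \<Rightarrow> nat list set" where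
  "subtree T u = {v \<in> nodes T. \<exists>r. v = u @ r}"

definition precedes :: "ptree \<Rightarrow> nat list \<Rightarrow> nat list \<Rightarrow> bool" where
  "precedes T v w \<longleftrightarrow> (\<exists>i j. i < j \<and> j < length (preorder T) \<and>
       preorder T ! i = v \<and> preorder T ! j = w)"

definition sticky :: "ptree \<Rightarrow> (nat list \<Rightarrow> nat) \<Rightarrow> bool" where
  "sticky T l \<longleftrightarrow>
     (\<forall>u\<in>nodes T. l u \<le> length u) \<and>
     (\<forall>u\<in>nodes T. u \<noteq> [] \<longrightarrow> (\<exists>v\<in>subtree T u. l v < length u)) \<and>
     (\<forall>u\<in>nodes T. \<forall>v\<in>subtree T u. l v = length u \<longrightarrow>
         (\<forall>w\<in>subtree T u. precedes T w v \<longrightarrow> l w \<ge> length u))"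

definition certificate :: "ptree \<Rightarrow> (nat list \<Rightarrow> nat) \<Rightarrow> nat list \<Rightarrow> nat list" where
  "certificate T l u = hd (filter (\<lambda>v. v \<in> subtree T u \<and> l v < length u) (preorder T))"

definition cert_count :: "ptree \<Rightarrow> (nat list \<Rightarrow> nat) \<Rightarrow> nat list \<Rightarrow> nat" where
  "cert_count T l w = card {u \<in> nodes T. u \<noteq> [] \<and> certificate T l u = w}"

end

theory Submission
  imports Defs
begin

lemma hd_filter_nth:
  "j < length xs \<Longrightarrow> Q (xs!j) \<Longrightarrow> (\<forall>i<j. \<not> Q (xs!i)) \<Longrightarrow> hd (filter Q xs) = xs!j"
proof (induction xs arbitrary: j)
  case Nil then show ?case by simp
next
  case (Cons x xs)
  show ?case
  proof (cases j)
    case 0 then show ?thesis using Cons by simp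
  next
    case (Suc k)
    have "\<not> Q x" using Cons.prems(3) Suc by force
    moreover have "hd (filter Q xs) = xs!k"
      using Cons.IH[of k] Cons.prems Suc by fastforce
    ultimately show ?thesis using Suc by simp
  qed
qed

lemma filter_hd_ex:
  "filter Q xs \<noteq> [] \<Longrightarrow> \<exists>j<length xs. xs!j = hd (filter Q xs) \<and> Q (xs!j) \<and> (\<forall>i<j. \<not> Q (xs!i))"
proof (induction xs)
  case Nil then show ?case by simp
next
  case (Cons x xs)
  show ?case
  proof (cases "Q x")
    case True then show ?thesis by (intro exI[of _ 0]) auto
  next
    case False
    then obtain j where "j<length xs" "xs!j = hd (filter Q xs)" "Q (xs!j)" "\<forall>i<j. \<not> Q (xs!i)"
      using Cons by auto
    then show ?thesis using False
      by (intro exI[of _ "Suc j"]) (auto simp: less_Suc_eq_0_disj)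
  qed
qed

lemma preorder_take: "v \<in> set (preorder T) \<Longrightarrow> take k v \<in> set (preorder T)"
proof (induction T arbitrary: v k rule: preorder.induct)
  case (1 ts)
  show ?case
  proof (cases "v = [] \<or> k = 0")
    case True then show ?thesis by auto
  next
    case False
    then obtain i v' where "i < length ts" "v' \<in> set (preorder (ts!i))" "v = i # v'"
      using "1.prems" by auto
    moreover obtain k' where "k = Suc k'" using False by (cases k) auto
    ultimately show ?thesis using "1.IH"[of i v' k'] by force
  qed
qed

lemma nodes_prefix: "u @ r \<in> nodes T \<Longrightarrow> u \<in> nodes T"
  unfolding nodes_def using preorder_take[of "u @ r" T "length u"] by simp

lemma key:
  fixes T l l'
  defines "P \<equiv> preorder T"
  assumes sl: "sticky T l" and sl': "sticky T l'"
    and j: "j < length P" and agree: "\<forall>i<j. l (P!i) = l' (P!i)"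
    and lt: "l (P!j) < l' (P!j)"
  shows "cert_count T l' (P!j) < cert_count T l (P!j)"
proof -
  define w where "w = P!j"
  have wn: "w \<in> nodes T" using j unfolding w_def P_def nodes_def by simp
  define Q where "Q = (\<lambda>m u v. v \<in> subtree T u \<and> m v < length u)"
  have cert_char: "certificate T m u = w \<longleftrightarrow>
      (\<exists>j'<length P. P!j' = w \<and> Q m u w \<and> (\<forall>i<j'. \<not> Q m u (P!i)))"
    if sm: "sticky T m" and un: "u \<in> nodes T" "u \<noteq> []" for m u
  proof -
    obtain v where v: "v \<in> subtree T u" "m v < length u" using sm un unfolding sticky_def by blast
    have "v \<in> set P" using v unfolding subtree_def nodes_def P_def by auto
    then have ne: "filter (Q m u) P \<noteq> []" using v unfolding Q_def filter_empty_conv by blast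
    have cdef: "certificate T m u = hd (filter (Q m u) P)"
      unfolding certificate_def Q_def P_def by simp
    show ?thesis
    proof
      assume "certificate T m u = w"
      then show "\<exists>j'<length P. P!j' = w \<and> Q m u w \<and> (\<forall>i<j'. \<not> Q m u (P!i))"
        using filter_hd_ex[OF ne] cdef by metis
    next
      assume "\<exists>j'<length P. P!j' = w \<and> Q m u w \<and> (\<forall>i<j'. \<not> Q m u (P!i))"
      then obtain j' where "j'<length P" "P!j' = w" "Q m u w" "\<forall>i<j'. \<not> Q m u (P!i)" by blast
      then show "certificate T m u = w" using cdef hd_filter_nth[of j' P "Q m u"] by simp
    qed
  qed
  define S where "S = (\<lambda>m. {u \<in> nodes T. u \<noteq> [] \<and> certificate T m u = w})"
  have sub: "S l' \<subseteq> S l"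
  proof
    fix u assume "u \<in> S l'"
    then have un: "u \<in> nodes T" "u \<noteq> []" and c: "certificate T l' u = w" unfolding S_def by auto
    then obtain j' where j': "j'<length P" "P!j' = w" "Q l' u w" "\<forall>i<j'. \<not> Q l' u (P!i)"
      using cert_char[OF sl' un] by blast
    have "j' = j"
    proof (rule ccontr)
      assume "j' \<noteq> j"
      then consider "j' < j" | "j < j'" by linarith
      then show False
      proof cases
        case 1 then show False using agree j' lt unfolding w_def by auto
      next
        case 2 then show False using j' unfolding w_def by auto
      qed
    qed
    have "Q l u w" using j'(3) lt unfolding Q_def w_def by auto
    moreover have "\<forall>i<j. \<not> Q l u (P!i)" using j' \<open>j' = j\<close> agree unfolding Q_def by auto
    ultimately have "certificate T l u = w" using cert_char[OF sl un] j unfolding w_def by blast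
    then show "u \<in> S l" using un unfolding S_def by auto
  qed
  define u0 where "u0 = take (l' w) w"
  have le: "l' w \<le> length w" using sl' wn unfolding sticky_def by blast
  have len: "length u0 = l' w" using le unfolding u0_def by simp
  have u0ne: "u0 \<noteq> []" using len lt unfolding w_def by auto
  have wsub: "w \<in> subtree T u0" using wn unfolding subtree_def u0_def
    by (metis (mono_tags, lifting) append_take_drop_id mem_Collect_eq)
  have u0n: "u0 \<in> nodes T" using wn nodes_prefix[of u0 "drop (l' w) w" T]
    unfolding u0_def by simp
  have c3: "\<forall>x\<in>subtree T u0. precedes T x w \<longrightarrow> l' x \<ge> length u0"
    using sl' u0n wsub len unfolding sticky_def by metis
  have "\<forall>i<j. \<not> Q l u0 (P!i)"
  proof (intro allI impI)
    fix i assume i: "i < j"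
    have "precedes T (P!i) w" unfolding precedes_def P_def w_def
      using i j P_def by blast
    then show "\<not> Q l u0 (P!i)" using c3 agree i unfolding Q_def by fastforce
  qed
  moreover have "Q l u0 w" using wsub len lt unfolding Q_def w_def by simp
  ultimately have "certificate T l u0 = w" using cert_char[OF sl u0n u0ne] j unfolding w_def by blast
  then have in1: "u0 \<in> S l" using u0n u0ne unfolding S_def by auto
  have "\<not> Q l' u0 w" using len unfolding Q_def by simp
  then have "u0 \<notin> S l'" using cert_char[OF sl' u0n u0ne] unfolding S_def by blast
  then have "S l' \<subset> S l" using sub in1 by blast
  moreover have "finite (S l)" unfolding S_def nodes_def by simp
  ultimately have "card (S l') < card (S l)" by (rule psubset_card_mono[rotated])
  then show ?thesis unfolding S_def cert_count_def w_def by simp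
qed

theorem corollary4p4:
  fixes T :: ptree and l l' :: "nat list \<Rightarrow> nat"
  assumes "sticky T l" and "sticky T l'"
    and "\<forall>w\<in>nodes T. cert_count T l w = cert_count T l' w"
  shows "\<forall>u\<in>nodes T. l u = l' u"
proof (rule ccontr)
  define P where "P = preorder T"
  assume "\<not> (\<forall>u\<in>nodes T. l u = l' u)"
  then obtain u where "u \<in> set P" "l u \<noteq> l' u" unfolding nodes_def P_def by blast
  from \<open>u \<in> set P\<close> obtain k where k0: "k < length P" "P!k = u" by (auto simp: in_set_conv_nth)
  have k: "k < length P \<and> l (P!k) \<noteq> l' (P!k)" using k0 \<open>l u \<noteq> l' u\<close> by simp
  define j where "j = (LEAST j. j < length P \<and> l (P!j) \<noteq> l' (P!j))"
  have jj: "j < length P \<and> l (P!j) \<noteq> l' (P!j)"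
    unfolding j_def by (rule LeastI[where k=k]) (rule k)
  then have j: "j < length P" "l (P!j) \<noteq> l' (P!j)" by auto
  have agree: "\<forall>i<j. l (P!i) = l' (P!i)"
  proof (intro allI impI)
    fix i assume "i < j"
    then have "\<not> (i < length P \<and> l (P!i) \<noteq> l' (P!i))"
      unfolding j_def by (rule not_less_Least)
    then show "l (P!i) = l' (P!i)" using \<open>i < j\<close> j(1) by simp
  qed
  have wn: "P!j \<in> nodes T" using j unfolding nodes_def P_def by simp
  consider "l (P!j) < l' (P!j)" | "l' (P!j) < l (P!j)" using j by linarith
  then show False
  proof cases
    case 1
    have "cert_count T l' (P!j) < cert_count T l (P!j)"
      using key[OF assms(1,2) j(1)[unfolded P_def]] agree 1 unfolding P_def by blast
    then show False using assms(3) wn by simp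
  next
    case 2
    have "cert_count T l (P!j) < cert_count T l' (P!j)"
      using key[OF assms(2,1) j(1)[unfolded P_def]] agree 2 unfolding P_def by metis
    then show False using assms(3) wn by simp
  qed
qed

end
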